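(* Let $r\in\mathbb N_0$ and suppose Assumption (A1) holds with $k=0$. Then there is a constant $\kappa_r>0$, independent of $\tau_n$ and $n$, such that $$\sup_{t\in I_n}\|\varphi(t)\|\le\kappa_r\sum_{i=0}^r\Big\|\mathscr I_n\big[\varphi'(t)(1+T_n^{-1}(t))^i\big]+\delta_{0,i}\varphi(t_{n-1}^+)\Big\|\qquad\forall\varphi\in P_r(I_n,\mathbb R^d).$$
   Context: Mesh: $t_0<t_1<\dots<t_N$, $I_n=(t_{n-1},t_n]$, $\tau_n=t_n-t_{n-1}\le1$; $v(t_n^\pm)$ denote one-sided limits. $T_n(\hat t)=\frac{t_n+t_{n-1}}{2}+\frac{\tau_n}{2}\hat t$. $\|\cdot\|$ is the Euclidean norm on $\mathbb R^d$; $P_s$ denotes polynomials of degree at most $s$; $\delta_{i,j}$ is the Kronecker symbol. $\widehat{\mathscr I}$ is a linear functional (reference integrator) on $C^{k_{\mathscr I}}([-1,1])$ with local version $\mathscr I_n[\varphi]=\frac{\tau_n}{2}\widehat{\mathscr I}[\varphi\circ T_n]$, acting componentwise. Assumption (A1) for $k=0$: whenever $\hat\psi\in P_{r-1}([-1,1])$ satisfies $\widehat{\mathscr I}[(1+\hat t)\hat\psi\hat\varphi]=0$ for all $\hat\varphi\in P_{r-1}([-1,1])$, then $\hat\psi\equiv0$. *)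

theory Defs
  imports "HOL-Analysis.Analysis"
begin

definition Ck :: "nat \<Rightarrow> (real \<Rightarrow> real) set" where
  "Ck k = {f. \<exists>D. D 0 = f \<and>
      (\<forall>j<k. \<forall>x\<in>{-1..1}. (D j has_real_derivative D (Suc j) x) (at x within {-1..1})) \<and>
      (\<forall>j\<le>k. continuous_on {-1..1} (D j))}"

definition ref_integrator :: "nat \<Rightarrow> ((real \<Rightarrow> real) \<Rightarrow> real) \<Rightarrow> bool" where
  "ref_integrator k I \<longleftrightarrow>
     (\<forall>f\<in>Ck k. \<forall>g\<in>Ck k. \<forall>a b. I (\<lambda>x. a * f x + b * g x) = a * I f + b * I g) \<and>
     (\<forall>f\<in>Ck k. \<forall>g\<in>Ck k. (\<forall>x\<in>{-1..1}. f x = g x) \<longrightarrow> I f = I g)"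

text \<open>Affine map T_n from [-1,1] onto [a,b] (a = t_{n-1}, b = t_n) and its inverse.\<close>
definition Tmap :: "real \<Rightarrow> real \<Rightarrow> real \<Rightarrow> real" where
  "Tmap a b x = (b + a) / 2 + (b - a) / 2 * x"

definition Tinv :: "real \<Rightarrow> real \<Rightarrow> real \<Rightarrow> real" where
  "Tinv a b t = (2 * t - a - b) / (b - a)"

definition local_int ::
  "((real \<Rightarrow> real) \<Rightarrow> real) \<Rightarrow> real \<Rightarrow> real \<Rightarrow> (real \<Rightarrow> 'a::euclidean_space) \<Rightarrow> 'a" where
  "local_int I a b f = (\<Sum>e\<in>Basis. scaleR ((b - a) / 2 * I (\<lambda>x. f (Tmap a b x) \<bullet> e)) e)"

text \<open>Real polynomials of degree < m (so m = r gives P_{r-1}, and P_{-1} = {0}).\<close>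
definition real_polys_lt :: "nat \<Rightarrow> (real \<Rightarrow> real) set" where
  "real_polys_lt m = {f. \<exists>c. f = (\<lambda>x. \<Sum>j<m. c j * x ^ j)}"

definition vec_polys_le :: "nat \<Rightarrow> (real \<Rightarrow> 'a::real_vector) set" where
  "vec_polys_le m = {f. \<exists>c. f = (\<lambda>x. \<Sum>j\<le>m. x ^ j *\<^sub>R c j)}"

definition A1_k0 :: "((real \<Rightarrow> real) \<Rightarrow> real) \<Rightarrow> nat \<Rightarrow> bool" where
  "A1_k0 I r \<longleftrightarrow>
     (\<forall>\<psi>\<in>real_polys_lt r.
        (\<forall>\<phi>\<in>real_polys_lt r. I (\<lambda>x. (1 + x) * \<psi> x * \<phi> x) = 0) \<longrightarrow> (\<forall>x\<in>{-1..1}. \<psi> x = 0))"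

end

theory Submission imports Defs "HOL-Computational_Algebra.Polynomial" "HOL-Analysis.Poly_Roots" "Jordan_Normal_Form.Determinant" begin

definition pf :: "(real \<Rightarrow> real) \<Rightarrow> bool" where "pf f \<longleftrightarrow> (\<exists>p. f = poly p)"

lemma pf_const[intro]: "pf (\<lambda>x. c)"
  unfolding pf_def by (rule exI[of _ "[:c:]"]) auto
lemma pf_id[intro]: "pf (\<lambda>x. x)"
  unfolding pf_def by (rule exI[of _ "[:0,1:]"]) auto
lemma pf_add[intro]: "pf f \<Longrightarrow> pf g \<Longrightarrow> pf (\<lambda>x. f x + g x)"
proof -
  assume "pf f" "pf g"
  then obtain p q where "f = poly p" "g = poly q" unfolding pf_def by auto
  then show ?thesis unfolding pf_def by (intro exI[of _ "p + q"]) (auto simp: fun_eq_iff)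
qed
lemma pf_mult[intro]: "pf f \<Longrightarrow> pf g \<Longrightarrow> pf (\<lambda>x. f x * g x)"
proof -
  assume "pf f" "pf g"
  then obtain p q where "f = poly p" "g = poly q" unfolding pf_def by auto
  then show ?thesis unfolding pf_def by (intro exI[of _ "p * q"]) (auto simp: fun_eq_iff)
qed
lemma pf_power[intro]: "pf f \<Longrightarrow> pf (\<lambda>x. f x ^ n)"
proof -
  assume "pf f"
  then obtain p where "f = poly p" unfolding pf_def by auto
  then show ?thesis unfolding pf_def by (intro exI[of _ "p ^ n"]) (auto simp: fun_eq_iff poly_power)
qed
lemma pf_sum[intro]: "(\<And>j. j \<in> S \<Longrightarrow> pf (f j)) \<Longrightarrow> pf (\<lambda>x. \<Sum>j\<in>S. f j x)"
proof (induction S rule: infinite_finite_induct)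
  case (insert a F)
  then have "pf (\<lambda>x. f a x + (\<Sum>j\<in>F. f j x))" by (intro pf_add) auto
  then show ?case using insert by simp
qed auto

lemma Ck_poly: "poly p \<in> Ck k"
  unfolding Ck_def
proof (intro CollectI exI[of _ "\<lambda>j. poly ((pderiv ^^ j) p)"] conjI allI ballI impI)
  fix j x
  show "(poly ((pderiv ^^ j) p) has_real_derivative poly ((pderiv ^^ Suc j) p) x) (at x within {-1..1})"
    by (auto intro!: has_field_derivative_at_within poly_DERIV)
next
  fix j
  show "continuous_on {-1..1} (poly ((pderiv ^^ j) p))"
    by (intro continuous_intros)
qed simp

lemma pf_Ck: "pf f \<Longrightarrow> f \<in> Ck k"
  unfolding pf_def using Ck_poly by auto

context
  fixes k I assumes RI: "ref_integrator k I"
begin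

lemma I_lin: "pf f \<Longrightarrow> pf g \<Longrightarrow> I (\<lambda>x. a * f x + b * g x) = a * I f + b * I g"
  using RI pf_Ck unfolding ref_integrator_def by blast

lemma I_zero: "I (\<lambda>x. 0) = 0"
  using I_lin[of "\<lambda>x. 0" "\<lambda>x. 0" 0 0] by auto

lemma I_cmult: "pf f \<Longrightarrow> I (\<lambda>x. c * f x) = c * I f"
  using I_lin[of f f c 0] by auto

lemma I_add: "pf f \<Longrightarrow> pf g \<Longrightarrow> I (\<lambda>x. f x + g x) = I f + I g"
  using I_lin[of f g 1 1] by auto

lemma I_sum: "(\<And>j. j \<in> S \<Longrightarrow> pf (f j)) \<Longrightarrow> I (\<lambda>x. \<Sum>j\<in>S. f j x) = (\<Sum>j\<in>S. I (f j))"
proof (induction S rule: infinite_finite_induct)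
  case (insert a F)
  have "I (\<lambda>x. f a x + (\<Sum>j\<in>F. f j x)) = I (f a) + I (\<lambda>x. \<Sum>j\<in>F. f j x)"
    using insert.prems by (intro I_add) auto
  then show ?case using insert by simp
qed (auto simp: I_zero)

lemma I_sum_c: "(\<And>j. j \<in> S \<Longrightarrow> pf (f j)) \<Longrightarrow> I (\<lambda>x. \<Sum>j\<in>S. c j * f j x) = (\<Sum>j\<in>S. c j * I (f j))"
proof -
  assume h: "\<And>j. j \<in> S \<Longrightarrow> pf (f j)"
  have "I (\<lambda>x. \<Sum>j\<in>S. c j * f j x) = (\<Sum>j\<in>S. I (\<lambda>x. c j * f j x))"
    using h by (intro I_sum) auto
  also have "\<dots> = (\<Sum>j\<in>S. c j * I (f j))" using h by (intro sum.cong refl I_cmult) auto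
  finally show ?thesis .
qed

end

lemma comp_coeffs: "\<exists>d. \<forall>x::real. (\<Sum>j\<le>r. c j * (\<alpha> + \<beta> * x) ^ j) = (\<Sum>k\<le>r. d k * x ^ k)"
proof -
  define p where "p = (\<Sum>j\<le>r. Polynomial.smult (c j) ([:\<alpha>, \<beta>:] ^ j))"
  have "degree p \<le> r" unfolding p_def
  proof (rule degree_sum_le[THEN order.trans])
    show "\<And>j. j \<in> {..r} \<Longrightarrow> degree (Polynomial.smult (c j) ([:\<alpha>, \<beta>:] ^ j)) \<le> r"
      by (rule order.trans[OF degree_smult_le], rule order.trans[OF degree_power_le]) auto
  qed auto
  then have pe: "p = (\<Sum>i\<le>r. monom (coeff p i) i)" by (simp add: poly_as_sum_of_monoms')
  show ?thesis
  proof (intro exI[of _ "coeff p"] allI)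
    fix x :: real
    have "(\<Sum>j\<le>r. c j * (\<alpha> + \<beta> * x) ^ j) = poly p x" unfolding p_def by (simp add: poly_sum algebra_simps)
    also have "\<dots> = (\<Sum>k\<le>r. coeff p k * x ^ k)" by (subst pe) (simp add: poly_sum poly_monom)
    finally show "(\<Sum>j\<le>r. c j * (\<alpha> + \<beta> * x) ^ j) = (\<Sum>k\<le>r. coeff p k * x ^ k)" .
  qed
qed

lemma deriv_eq:
  fixes c d :: "nat \<Rightarrow> real"
  assumes "\<forall>x::real. (\<Sum>j\<le>r. c j * (\<alpha> + \<beta> * x) ^ j) = (\<Sum>k\<le>r. d k * x ^ k)"
  shows "\<beta> * (\<Sum>j\<le>r. c j * (of_nat j * (\<alpha> + \<beta> * y) ^ (j - 1))) = (\<Sum>k\<le>r. d k * (of_nat k * y ^ (k - 1)))"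
proof -
  have fe: "(\<lambda>x. \<Sum>j\<le>r. c j * (\<alpha> + \<beta> * x) ^ j) = (\<lambda>x. \<Sum>k\<le>r. d k * x ^ k)" using assms by auto
  have d1: "((\<lambda>x. \<Sum>j\<le>r. c j * (\<alpha> + \<beta> * x) ^ j) has_real_derivative
      \<beta> * (\<Sum>j\<le>r. c j * (of_nat j * (\<alpha> + \<beta> * y) ^ (j - 1)))) (at y)"
    by (auto intro!: derivative_eq_intros simp: sum_distrib_left algebra_simps)
  have d2: "((\<lambda>x. \<Sum>k\<le>r. d k * x ^ k) has_real_derivative (\<Sum>k\<le>r. d k * (of_nat k * y ^ (k - 1)))) (at y)"
    by (auto intro!: derivative_eq_intros simp: algebra_simps)
  show ?thesis using DERIV_unique[OF d1 d2[folded fe]] .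
qed

lemma inj_bound:
 fixes M :: "nat \<Rightarrow> nat \<Rightarrow> real"
 assumes inj: "\<And>d. (\<forall>i\<le>r. (\<Sum>j\<le>r. M i j * d j) = 0) \<Longrightarrow> (\<forall>j\<le>r. d j = 0)"
 shows "\<exists>C>0. \<forall>d. (\<Sum>j\<le>r. \<bar>d j\<bar>) \<le> C * (\<Sum>i\<le>r. \<bar>\<Sum>j\<le>r. M i j * d j\<bar>)"
proof -
  define n where "n = Suc r"
  have set: "{0..<n} = {..r}" unfolding n_def by auto
  define A where "A = mat n n (\<lambda>(i,j). M i j)"
  have A: "A \<in> carrier_mat n n" unfolding A_def by auto
  have "det A \<noteq> 0"
  proof
    assume "det A = 0"
    then obtain v where v: "v \<in> carrier_vec n" "v \<noteq> 0\<^sub>v n" "A *\<^sub>v v = 0\<^sub>v n"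
      using det_0_iff_vec_prod_zero_field[OF A] by auto
    define d where "d j = v $ j" for j
    have "\<forall>i\<le>r. (\<Sum>j\<le>r. M i j * d j) = 0"
    proof (intro allI impI)
      fix i assume i: "i \<le> r"
      have "(A *\<^sub>v v) $ i = 0" using v(3) i unfolding n_def by auto
      thus "(\<Sum>j\<le>r. M i j * d j) = 0" using i v(1)
        unfolding A_def d_def mult_mat_vec_def scalar_prod_def
        by (auto simp: n_def set[unfolded n_def] )
    qed
    from inj[OF this] have "\<forall>j\<le>r. v $ j = 0" unfolding d_def .
    hence "v = 0\<^sub>v n" using v(1) by (intro eq_vecI) (auto simp: n_def)
    with v(2) show False by simp
  qed
  from det_non_zero_imp_unit[OF A this, of "()"]
  obtain B where BA: "B * A = 1\<^sub>m n" and B: "B \<in> carrier_mat n n"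
    unfolding Units_def ring_mat_def by auto
  define C where "C = 1 + (\<Sum>j\<le>r. \<Sum>i\<le>r. \<bar>B $$ (j,i)\<bar>)"
  have Cpos: "C > 0" unfolding C_def by (smt (verit) sum_nonneg abs_ge_zero)
  have Cge: "\<And>i. i \<le> r \<Longrightarrow> (\<Sum>j\<le>r. \<bar>B $$ (j,i)\<bar>) \<le> C"
  proof -
    fix i assume "i \<le> r"
    have "(\<Sum>j\<le>r. \<bar>B $$ (j,i)\<bar>) \<le> (\<Sum>j\<le>r. \<Sum>i\<le>r. \<bar>B $$ (j,i)\<bar>)"
      by (rule sum_mono) (rule member_le_sum, auto simp: \<open>i \<le> r\<close>)
    thus "(\<Sum>j\<le>r. \<bar>B $$ (j,i)\<bar>) \<le> C" unfolding C_def by simp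
  qed
  show ?thesis
  proof (intro exI[of _ C] conjI allI Cpos)
    fix d :: "nat \<Rightarrow> real"
    define v where "v = vec n d"
    define w where "w i = (\<Sum>j\<le>r. M i j * d j)" for i
    have v: "v \<in> carrier_vec n" unfolding v_def by auto
    have Av: "A *\<^sub>v v = vec n w"
    proof (rule eq_vecI)
      fix i assume "i < dim_vec (vec n w)"
      then have i: "i < n" by simp
      have "(A *\<^sub>v v) $ i = (\<Sum>j\<in>{0..<n}. M i j * d j)"
        using i unfolding A_def v_def mult_mat_vec_def scalar_prod_def by simp
      then show "(A *\<^sub>v v) $ i = vec n w $ i" using i unfolding set w_def by simp
    qed (simp add: A_def)
    have "v = (B * A) *\<^sub>v v" using BA v by simp
    also have "\<dots> = B *\<^sub>v (A *\<^sub>v v)" using assoc_mult_mat_vec[OF B A v] .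
    finally have vv: "v = B *\<^sub>v vec n w" using Av by simp
    have dj: "\<And>j. j \<le> r \<Longrightarrow> d j = (\<Sum>i\<le>r. B $$ (j,i) * w i)"
    proof -
      fix j assume j: "j \<le> r"
      have "d j = v $ j" using j by (simp add: v_def n_def)
      also have "\<dots> = (\<Sum>i\<le>r. B $$ (j,i) * w i)"
        using j B unfolding vv
        by (auto simp: mult_mat_vec_def scalar_prod_def set n_def row_def atLeast0LessThan lessThan_Suc_atMost[symmetric])
      finally show "d j = (\<Sum>i\<le>r. B $$ (j,i) * w i)" .
    qed
    have "(\<Sum>j\<le>r. \<bar>d j\<bar>) \<le> (\<Sum>j\<le>r. \<Sum>i\<le>r. \<bar>B $$ (j,i)\<bar> * \<bar>w i\<bar>)"
    proof (rule sum_mono)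
      fix j assume "j \<in> {..r}"
      then have "\<bar>d j\<bar> = \<bar>\<Sum>i\<le>r. B $$ (j,i) * w i\<bar>" using dj by simp
      also have "\<dots> \<le> (\<Sum>i\<le>r. \<bar>B $$ (j,i) * w i\<bar>)" by (rule sum_abs)
      finally show "\<bar>d j\<bar> \<le> (\<Sum>i\<le>r. \<bar>B $$ (j,i)\<bar> * \<bar>w i\<bar>)" by (simp add: abs_mult)
    qed
    also have "\<dots> = (\<Sum>i\<le>r. (\<Sum>j\<le>r. \<bar>B $$ (j,i)\<bar>) * \<bar>w i\<bar>)"
      by (subst sum.swap) (simp add: sum_distrib_right)
    also have "\<dots> \<le> (\<Sum>i\<le>r. C * \<bar>w i\<bar>)"
      by (rule sum_mono) (rule mult_right_mono, auto intro: Cge)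
    also have "\<dots> = C * (\<Sum>i\<le>r. \<bar>w i\<bar>)" by (simp add: sum_distrib_left)
    finally show "(\<Sum>j\<le>r. \<bar>d j\<bar>) \<le> C * (\<Sum>i\<le>r. \<bar>\<Sum>j\<le>r. M i j * d j\<bar>)" unfolding w_def .
  qed
qed

definition Mm :: "((real \<Rightarrow> real) \<Rightarrow> real) \<Rightarrow> nat \<Rightarrow> nat \<Rightarrow> real" where
  "Mm I i j = I (\<lambda>x. (1 + x) ^ i * (of_nat j * x ^ (j - 1))) + (if i = 0 then (-1) ^ j else 0)"

lemma Mm_inj:
  assumes RI: "ref_integrator k I" and A1: "A1_k0 I r"
    and h: "\<forall>i\<le>r. (\<Sum>j\<le>r. Mm I i j * d j) = 0"
  shows "\<forall>j\<le>r. d j = 0"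
proof -
  define \<psi> where "\<psi> x = (\<Sum>j\<le>r. d j * (of_nat j * x ^ (j - 1)))" for x :: real
  have pfpsi: "pf \<psi>" unfolding \<psi>_def by (intro pf_sum pf_mult) auto
  have row: "(\<Sum>j\<le>r. Mm I i j * d j) = I (\<lambda>x. (1 + x) ^ i * \<psi> x)
      + (if i = 0 then (\<Sum>j\<le>r. d j * (-1) ^ j) else 0)" for i
  proof -
    have "I (\<lambda>x. (1 + x) ^ i * \<psi> x) = I (\<lambda>x. \<Sum>j\<le>r. d j * ((1 + x) ^ i * (of_nat j * x ^ (j - 1))))"
      unfolding \<psi>_def by (simp add: sum_distrib_left algebra_simps)
    also have "\<dots> = (\<Sum>j\<le>r. d j * I (\<lambda>x. (1 + x) ^ i * (of_nat j * x ^ (j - 1))))"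
      by (rule I_sum_c[OF RI]) (intro pf_mult pf_power pf_add pf_const pf_id)
    finally show ?thesis unfolding Mm_def
      by (simp add: algebra_simps sum.distrib sum_distrib_left)
  qed
  have rowi: "I (\<lambda>x. (1 + x) ^ Suc i * \<psi> x) = 0" if "Suc i \<le> r" for i
    using h that row[of "Suc i"] by simp
  have psi_in: "\<psi> \<in> real_polys_lt r"
  proof (cases r)
    case 0
    then show ?thesis unfolding real_polys_lt_def \<psi>_def by auto
  next
    case (Suc m)
    show ?thesis unfolding real_polys_lt_def
    proof (intro CollectI exI[of _ "\<lambda>j. d (Suc j) * of_nat (Suc j)"] ext)
      fix x
      show "\<psi> x = (\<Sum>j<r. d (Suc j) * of_nat (Suc j) * x ^ j)"
        unfolding \<psi>_def Suc sum.atMost_Suc_shift lessThan_Suc_atMost by (simp add: algebra_simps)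
    qed
  qed
  have orth: "I (\<lambda>x. (1 + x) * \<psi> x * \<phi> x) = 0" if phi: "\<phi> \<in> real_polys_lt r" for \<phi>
  proof -
    obtain c where c: "\<phi> = (\<lambda>x. \<Sum>j<r. c j * x ^ j)" using phi unfolding real_polys_lt_def by auto
    have mono: "I (\<lambda>x. (1 + x) * \<psi> x * x ^ m) = 0" if "m < r" for m
    proof -
      have "(\<lambda>x. (1 + x) * \<psi> x * x ^ m) =
          (\<lambda>x. \<Sum>kk\<le>m. (of_nat (m choose kk) * (-1) ^ (m - kk)) * ((1 + x) ^ Suc kk * \<psi> x))"
      proof
        fix x :: real
        have "x ^ m = ((1 + x) + (-1)) ^ m" by simp
        also have "\<dots> = (\<Sum>kk\<le>m. of_nat (m choose kk) * (1 + x) ^ kk * (-1) ^ (m - kk))"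
          by (rule binomial_ring)
        finally show "(1 + x) * \<psi> x * x ^ m =
          (\<Sum>kk\<le>m. (of_nat (m choose kk) * (-1) ^ (m - kk)) * ((1 + x) ^ Suc kk * \<psi> x))"
          by (simp add: sum_distrib_left sum_distrib_right algebra_simps)
      qed
      then have "I (\<lambda>x. (1 + x) * \<psi> x * x ^ m) = I (\<lambda>x. \<Sum>kk\<le>m. (of_nat (m choose kk) * (-1) ^ (m - kk)) * ((1 + x) ^ Suc kk * \<psi> x))"
        by (rule arg_cong)
      also have "\<dots> =
          (\<Sum>kk\<le>m. (of_nat (m choose kk) * (-1) ^ (m - kk)) * I (\<lambda>x. (1 + x) ^ Suc kk * \<psi> x))"
        by (rule I_sum_c[OF RI]) (intro pf_mult pf_power pf_add pf_const pf_id pfpsi)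
      also have "\<dots> = 0" using rowi that by (intro sum.neutral) auto
      finally show ?thesis .
    qed
    have "(\<lambda>x. (1 + x) * \<psi> x * \<phi> x) = (\<lambda>x. \<Sum>j<r. c j * ((1 + x) * \<psi> x * x ^ j))"
      unfolding c by (simp add: sum_distrib_left algebra_simps)
    then have "I (\<lambda>x. (1 + x) * \<psi> x * \<phi> x) = I (\<lambda>x. \<Sum>j<r. c j * ((1 + x) * \<psi> x * x ^ j))"
      by (rule arg_cong)
    also have "\<dots> = (\<Sum>j<r. c j * I (\<lambda>x. (1 + x) * \<psi> x * x ^ j))"
      by (rule I_sum_c[OF RI]) (intro pf_mult pf_power pf_add pf_const pf_id pfpsi)
    also have "\<dots> = 0" using mono by simp
    finally show ?thesis .
  qed
  have psi0: "\<forall>x\<in>{-1..1}. \<psi> x = 0" using A1 psi_in orth unfolding A1_k0_def by blast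
  have dpos: "d j = 0" if jj: "1 \<le> j" "j \<le> r" for j
  proof -
    obtain m where m: "r = Suc m" using jj by (cases r) auto
    define cc where "cc j = d (Suc j) * of_nat (Suc j)" for j
    have pe: "\<psi> x = (\<Sum>i\<le>m. cc i * x ^ i)" for x
      unfolding \<psi>_def cc_def m sum.atMost_Suc_shift by (simp add: algebra_simps)
    have "{-1..1::real} \<subseteq> {z. (\<Sum>i\<le>m. cc i * z ^ i) = 0}" using psi0 pe by auto
    moreover have "infinite {-1..1::real}" by (simp add: infinite_Icc)
    ultimately have "infinite {z. (\<Sum>i\<le>m. cc i * z ^ i) = 0}" using finite_subset by blast
    then have "\<forall>i\<le>m. cc i = 0" using polyfun_finite_roots by blast
    moreover obtain i where "j = Suc i" "i \<le> m" using jj m by (cases j) auto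
    ultimately show "d j = 0" unfolding cc_def by auto
  qed
  have "(\<Sum>j\<le>r. Mm I 0 j * d j) = (\<Sum>j\<in>{0}. Mm I 0 j * d j)"
    by (rule sum.mono_neutral_right) (use dpos in auto)
  then have "Mm I 0 0 * d 0 = 0" using h by simp
  moreover have "Mm I 0 0 = 1" unfolding Mm_def using I_zero[OF RI] by simp
  ultimately have "d 0 = 0" by simp
  then show ?thesis using dpos by (metis le_zero_eq not_less_eq_eq One_nat_def Suc_leI)
qed

lemma scalar_core:
  assumes RI: "ref_integrator k I" and A1: "A1_k0 I r"
  shows "\<exists>C>0. \<forall>d x. x \<in> {-1..1} \<longrightarrow>
     \<bar>\<Sum>j\<le>r. d j * x ^ j\<bar> \<le> C * (\<Sum>i\<le>r. \<bar>\<Sum>j\<le>r. Mm I i j * d j\<bar>)"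
proof -
  obtain C where C: "C > 0" "\<And>d. (\<Sum>j\<le>r. \<bar>d j\<bar>) \<le> C * (\<Sum>i\<le>r. \<bar>\<Sum>j\<le>r. Mm I i j * d j\<bar>)"
    using inj_bound[of r "Mm I"] Mm_inj[OF RI A1] by blast
  show ?thesis
  proof (intro exI[of _ C] conjI allI impI C(1))
    fix d and x :: real assume x: "x \<in> {-1..1}"
    have "\<bar>\<Sum>j\<le>r. d j * x ^ j\<bar> \<le> (\<Sum>j\<le>r. \<bar>d j * x ^ j\<bar>)" by (rule sum_abs)
    also have "\<dots> \<le> (\<Sum>j\<le>r. \<bar>d j\<bar>)"
    proof (rule sum_mono)
      fix j
      have "\<bar>x\<bar> ^ j \<le> 1" using x by (intro power_le_one) auto
      then show "\<bar>d j * x ^ j\<bar> \<le> \<bar>d j\<bar>"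
        by (simp add: abs_mult power_abs mult_left_le)
    qed
    also have "\<dots> \<le> C * (\<Sum>i\<le>r. \<bar>\<Sum>j\<le>r. Mm I i j * d j\<bar>)" by (rule C(2))
    finally show "\<bar>\<Sum>j\<le>r. d j * x ^ j\<bar> \<le> C * (\<Sum>i\<le>r. \<bar>\<Sum>j\<le>r. Mm I i j * d j\<bar>)" .
  qed
qed


lemma inner_local_int:
  fixes F :: "real \<Rightarrow> 'a::euclidean_space"
  assumes "e \<in> Basis"
  shows "local_int I a b F \<bullet> e = (b - a) / 2 * I (\<lambda>x. F (Tmap a b x) \<bullet> e)"
  using assms unfolding local_int_def
  by (simp add: inner_sum_left inner_Basis if_distrib sum.delta cong: if_cong)

theorem mainTheorem5:
  fixes Ihat :: "(real \<Rightarrow> real) \<Rightarrow> real" and r kI :: nat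
  assumes "ref_integrator kI Ihat" and "A1_k0 Ihat r"
  shows "\<exists>\<kappa>>0. \<forall>(t::nat \<Rightarrow> real) N n.
     (\<forall>m<N. t m < t (Suc m)) \<and> (\<forall>m\<in>{1..N}. t m - t (m - 1) \<le> 1) \<and> n \<in> {1..N} \<longrightarrow>
     (\<forall>\<phi>::real \<Rightarrow> 'a::euclidean_space. \<phi> \<in> vec_polys_le r \<longrightarrow>
        (SUP s\<in>{t (n - 1)<..t n}. norm (\<phi> s))
          \<le> \<kappa> * (\<Sum>i\<le>r. norm (local_int Ihat (t (n - 1)) (t n)
                  (\<lambda>s. (1 + Tinv (t (n - 1)) (t n) s) ^ i *\<^sub>R vector_derivative \<phi> (at s))
                + (if i = 0 then Lim (at_right (t (n - 1))) \<phi> else 0))))"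
proof -
  note RI = assms(1)
  obtain C where C: "C > 0" "\<And>d x. x \<in> {-1..1} \<Longrightarrow>
      \<bar>\<Sum>j\<le>r. d j * x ^ j\<bar> \<le> C * (\<Sum>i\<le>r. \<bar>\<Sum>j\<le>r. Mm Ihat i j * d j\<bar>)"
    using scalar_core[OF assms] by blast
  define \<kappa> where "\<kappa> = real DIM('a) * C"
  have kpos: "\<kappa> > 0" unfolding \<kappa>_def using C(1) by simp
  show ?thesis
  proof (intro exI[of _ \<kappa>] conjI kpos allI impI)
    fix t :: "nat \<Rightarrow> real" and N n and \<phi> :: "real \<Rightarrow> 'a"
    assume H: "(\<forall>m<N. t m < t (Suc m)) \<and> (\<forall>m\<in>{1..N}. t m - t (m - 1) \<le> 1) \<and> n \<in> {1..N}"
      and P: "\<phi> \<in> vec_polys_le r"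
    define a where "a = t (n - 1)"
    define b where "b = t n"
    have n1: "n - 1 < N" "Suc (n - 1) = n" using H by auto
    have ab: "a < b" unfolding a_def b_def using H n1 by metis
    obtain c where c: "\<phi> = (\<lambda>x. \<Sum>j\<le>r. x ^ j *\<^sub>R c j)" using P unfolding vec_polys_le_def by auto
    define \<alpha> where "\<alpha> = (b + a) / 2"
    define \<beta> where "\<beta> = (b - a) / 2"
    have Tm: "Tmap a b y = \<alpha> + \<beta> * y" for y unfolding Tmap_def \<alpha>_def \<beta>_def by simp
    have TiTm: "Tinv a b (Tmap a b y) = y" for y
      unfolding Tmap_def Tinv_def using ab by (simp add: divide_simps)
    define w where "w i = local_int Ihat a b
                  (\<lambda>s. (1 + Tinv a b s) ^ i *\<^sub>R vector_derivative \<phi> (at s))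
                + (if i = 0 then Lim (at_right a) \<phi> else 0)" for i
    have vd: "vector_derivative \<phi> (at s) = (\<Sum>j\<le>r. (of_nat j * s ^ (j - 1)) *\<^sub>R c j)" for s
    proof (rule vector_derivative_at)
      show "(\<phi> has_vector_derivative (\<Sum>j\<le>r. (of_nat j * s ^ (j - 1)) *\<^sub>R c j)) (at s)"
        unfolding c has_vector_derivative_def
        by (auto intro!: derivative_eq_intros ext simp: scaleR_sum_right algebra_simps)
    qed
    have lim: "Lim (at_right a) \<phi> = \<phi> a"
      by (rule tendsto_Lim) (auto simp: c intro!: tendsto_intros)
    have per_e: "\<bar>\<phi> s \<bullet> e\<bar> \<le> C * (\<Sum>i\<le>r. norm (w i))" if e: "e \<in> Basis" and s: "s \<in> {a<..b}" for e s
    proof -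
      define ce where "ce j = c j \<bullet> e" for j
      obtain d where d: "\<forall>x::real. (\<Sum>j\<le>r. ce j * (\<alpha> + \<beta> * x) ^ j) = (\<Sum>k\<le>r. d k * x ^ k)"
        using comp_coeffs by blast
      have phie: "\<phi> y \<bullet> e = (\<Sum>j\<le>r. ce j * y ^ j)" for y
        unfolding c ce_def by (simp add: inner_sum_left algebra_simps)
      define x where "x = Tinv a b s"
      have ba: "0 < b - a" using ab by simp
      have x: "x \<in> {-1..1}" using s ba unfolding x_def Tinv_def by (auto simp: divide_simps)
      have sx: "s = \<alpha> + \<beta> * x" unfolding x_def Tinv_def \<alpha>_def \<beta>_def using ba by (auto simp: divide_simps algebra_simps)
      have wi: "w i \<bullet> e = (\<Sum>k\<le>r. Mm Ihat i k * d k)" for i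
      proof -
        have F: "(\<lambda>y. ((1 + Tinv a b (Tmap a b y)) ^ i *\<^sub>R vector_derivative \<phi> (at (Tmap a b y))) \<bullet> e)
          = (\<lambda>y. (1 + y) ^ i * (\<Sum>j\<le>r. ce j * (of_nat j * (\<alpha> + \<beta> * y) ^ (j - 1))))"
          unfolding TiTm unfolding vd Tm ce_def by (simp add: inner_sum_left algebra_simps)
        have "local_int Ihat a b (\<lambda>s. (1 + Tinv a b s) ^ i *\<^sub>R vector_derivative \<phi> (at s)) \<bullet> e
            = \<beta> * Ihat (\<lambda>y. (1 + y) ^ i * (\<Sum>j\<le>r. ce j * (of_nat j * (\<alpha> + \<beta> * y) ^ (j - 1))))"
          unfolding inner_local_int[OF e] F \<beta>_def ..
        also have "\<dots> = Ihat (\<lambda>y. \<beta> * ((1 + y) ^ i * (\<Sum>j\<le>r. ce j * (of_nat j * (\<alpha> + \<beta> * y) ^ (j - 1)))))"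
          by (rule I_cmult[OF RI, symmetric]) (intro pf_mult pf_power pf_add pf_const pf_id pf_sum)
        also have "\<dots> = Ihat (\<lambda>y. \<Sum>k\<le>r. d k * ((1 + y) ^ i * (of_nat k * y ^ (k - 1))))"
        proof (rule arg_cong[where f = Ihat], rule ext)
          fix y
          have "\<beta> * ((1 + y) ^ i * (\<Sum>j\<le>r. ce j * (of_nat j * (\<alpha> + \<beta> * y) ^ (j - 1))))
              = (1 + y) ^ i * (\<beta> * (\<Sum>j\<le>r. ce j * (of_nat j * (\<alpha> + \<beta> * y) ^ (j - 1))))" by simp
          also have "\<dots> = (1 + y) ^ i * (\<Sum>k\<le>r. d k * (of_nat k * y ^ (k - 1)))"
            using deriv_eq[OF d, of y] by simp
          finally show "\<beta> * ((1 + y) ^ i * (\<Sum>j\<le>r. ce j * (of_nat j * (\<alpha> + \<beta> * y) ^ (j - 1))))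
              = (\<Sum>k\<le>r. d k * ((1 + y) ^ i * (of_nat k * y ^ (k - 1))))"
            by (simp add: sum_distrib_left algebra_simps)
        qed
        also have "\<dots> = (\<Sum>k\<le>r. d k * Ihat (\<lambda>y. (1 + y) ^ i * (of_nat k * y ^ (k - 1))))"
          by (rule I_sum_c[OF RI]) (intro pf_mult pf_power pf_add pf_const pf_id)
        finally have L: "local_int Ihat a b (\<lambda>s. (1 + Tinv a b s) ^ i *\<^sub>R vector_derivative \<phi> (at s)) \<bullet> e
            = (\<Sum>k\<le>r. d k * Ihat (\<lambda>y. (1 + y) ^ i * (of_nat k * y ^ (k - 1))))" .
        have phia: "\<phi> a \<bullet> e = (\<Sum>k\<le>r. d k * (-1) ^ k)"
        proof -
          have "a = \<alpha> + \<beta> * (-1)" unfolding \<alpha>_def \<beta>_def by (simp add: field_simps)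
          then show ?thesis unfolding phie using d by metis
        qed
        have "w i \<bullet> e = (\<Sum>k\<le>r. d k * Ihat (\<lambda>y. (1 + y) ^ i * (of_nat k * y ^ (k - 1))))
            + (if i = 0 then (\<Sum>k\<le>r. d k * (-1) ^ k) else 0)"
          unfolding w_def lim inner_add_left L using phia by (cases "i = 0") simp_all
        also have "\<dots> = (\<Sum>k\<le>r. Mm Ihat i k * d k)"
          unfolding Mm_def by (cases "i = 0") (simp_all add: sum.distrib[symmetric] algebra_simps)
        finally show ?thesis .
      qed
      have "\<bar>\<phi> s \<bullet> e\<bar> = \<bar>\<Sum>k\<le>r. d k * x ^ k\<bar>" unfolding phie sx using d by simp
      also have "\<dots> \<le> C * (\<Sum>i\<le>r. \<bar>\<Sum>j\<le>r. Mm Ihat i j * d j\<bar>)" by (rule C(2)[OF x])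
      also have "\<dots> \<le> C * (\<Sum>i\<le>r. norm (w i))"
        using C(1) unfolding wi[symmetric] by (intro mult_left_mono sum_mono Basis_le_norm e) auto
      finally show ?thesis .
    qed
    have main: "norm (\<phi> s) \<le> \<kappa> * (\<Sum>i\<le>r. norm (w i))" if s: "s \<in> {a<..b}" for s
    proof -
      have "norm (\<phi> s) \<le> (\<Sum>e\<in>Basis. \<bar>\<phi> s \<bullet> e\<bar>)" by (rule norm_le_l1)
      also have "\<dots> \<le> (\<Sum>e\<in>(Basis::'a set). C * (\<Sum>i\<le>r. norm (w i)))"
        by (rule sum_mono) (rule per_e[OF _ s])
      also have "\<dots> = \<kappa> * (\<Sum>i\<le>r. norm (w i))" unfolding \<kappa>_def by simp
      finally show ?thesis .
    qed
    have "(SUP s\<in>{a<..b}. norm (\<phi> s)) \<le> \<kappa> * (\<Sum>i\<le>r. norm (w i))"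
      using ab main by (intro cSUP_least) auto
    then show "(SUP s\<in>{t (n - 1)<..t n}. norm (\<phi> s))
          \<le> \<kappa> * (\<Sum>i\<le>r. norm (local_int Ihat (t (n - 1)) (t n)
                  (\<lambda>s. (1 + Tinv (t (n - 1)) (t n) s) ^ i *\<^sub>R vector_derivative \<phi> (at s))
                + (if i = 0 then Lim (at_right (t (n - 1))) \<phi> else 0)))"
      unfolding w_def a_def b_def .
  qed
qed

end
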